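(* Fix $\ell, \tilde\ell \in \mathbb{R}_{>0}$ and $\delta \in \mathbb{R}$. The map $f \mapsto C(f)$ is one-to-one when restricted to the set of barcodes \[ \Big\{ f = x^{\tilde\alpha}y^{\tilde\ell} + \sum_{i=1}^n x^{\alpha_i}y^{\ell} \ :\ n\ge 0,\ \tilde\alpha,\alpha_i\in\mathbb{R},\ \Delta(f) = \delta \Big\}. \]
   Context: A barcode is a finite formal sum $f = \sum_{j} x^{a_j}y^{l_j}$ with $a_j \in \mathbb{R}$, $l_j \in \mathbb{R}_{>0}$ (a finite multiset of bars). Its critical series is $C(f) = \sum_j x^{a_j} - \sum_j x^{a_j+l_j}$ (a finite integer combination of symbols $x^g$, $g\in\mathbb{R}$), and its drift is $\Delta(f) = \sum_j a_j$, the sum of the birth grades of all bars. *)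

theory Defs
  imports Complex_Main "HOL-Library.Multiset"
begin

text \<open>A barcode is a finite multiset of bars (a, l), standing for the monomial x^a y^l,
  with birth grade a and length l > 0.\<close>
type_synonym barcode = "(real \<times> real) multiset"

definition is_barcode :: "barcode \<Rightarrow> bool" where
  "is_barcode f \<longleftrightarrow> (\<forall>b \<in># f. snd b > 0)"

text \<open>Critical series C(f) = sum_j x^(a_j) - sum_j x^(a_j + l_j), represented by its
  coefficient function g \<mapsto> (coefficient of x^g), which is finitely supported.\<close>
definition crit :: "barcode \<Rightarrow> real \<Rightarrow> int" where
  "crit f g = int (size (filter_mset (\<lambda>b. fst b = g) f))
            - int (size (filter_mset (\<lambda>b. fst b + snd b = g) f))"

definition drift :: "barcode \<Rightarrow> real" where
  "drift f = sum_mset (image_mset fst f)"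

definition barcode_family :: "real \<Rightarrow> real \<Rightarrow> real \<Rightarrow> barcode set" where
  "barcode_family l lt \<delta> =
     {f. \<exists>a0 (alphas :: real list). f = add_mset (a0, lt) (mset (map (\<lambda>a. (a, l)) alphas))
                              \<and> drift f = \<delta>}"

end

theory Submission
  imports Defs
begin

lemma crit_add: "crit (add_mset b f) g = crit f g + (if fst b = g then 1 else 0) - (if fst b + snd b = g then 1 else 0)"
  by (simp add: crit_def)

lemma crit_union: "crit (A + B) g = crit A g + crit B g"
  by (simp add: crit_def)

definition mom :: "nat \<Rightarrow> barcode \<Rightarrow> real" where
  "mom k f = sum_mset (image_mset (\<lambda>b. (fst b)^k - (fst b + snd b)^k) f)"

lemma mom_crit:
  assumes "finite S" "\<forall>b\<in>#f. fst b \<in> S \<and> fst b + snd b \<in> S"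
  shows "(\<Sum>g\<in>S. of_int (crit f g) * g^k) = mom k f"
  using assms(2)
proof (induction f)
  case empty
  then show ?case by (simp add: crit_def mom_def)
next
  case (add b f)
  have "(\<Sum>g\<in>S. of_int (crit (add_mset b f) g) * g^k) =
     (\<Sum>g\<in>S. of_int (crit f g) * g^k + (if fst b = g then g^k else 0) - (if fst b + snd b = g then g^k else 0))"
    by (rule sum.cong) (auto simp: crit_add algebra_simps)
  also have "\<dots> = (\<Sum>g\<in>S. of_int (crit f g) * g^k) + (fst b)^k - (fst b + snd b)^k"
    using add.prems assms(1) by (simp add: sum.distrib sum_subtractf)
  also have "\<dots> = mom k (add_mset b f)" using add by (simp add: mom_def)
  finally show ?case .
qed

lemma mom_eq:
  assumes "crit f = crit g"
  shows "mom k f = mom k g"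
proof -
  define S where "S = (fst ` set_mset f) \<union> ((\<lambda>b. fst b + snd b) ` set_mset f)
     \<union> (fst ` set_mset g) \<union> ((\<lambda>b. fst b + snd b) ` set_mset g)"
  have fin: "finite S" unfolding S_def by simp
  have "mom k f = (\<Sum>g\<in>S. of_int (crit f g) * g^k)"
    by (rule mom_crit[symmetric]) (auto simp: fin S_def)
  also have "\<dots> = (\<Sum>x\<in>S. of_int (crit g x) * x^k)" using assms by simp
  also have "\<dots> = mom k g"
    by (rule mom_crit) (auto simp: fin S_def)
  finally show ?thesis .
qed

lemma mom1_list: "mom 1 (mset (map (\<lambda>a. (a, l)) xs)) = - real (length xs) * l"
  by (induction xs) (auto simp: mom_def algebra_simps)

lemma mom2_list: "mom 2 (mset (map (\<lambda>a. (a, l)) xs)) = - 2 * l * sum_list xs - real (length xs) * l^2"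
  by (induction xs) (auto simp: mom_def algebra_simps power2_eq_square)

lemma drift_list: "drift (mset (map (\<lambda>a. (a, l)) xs)) = sum_list xs"
  by (induction xs) (auto simp: drift_def)

lemma mom_add: "mom k (add_mset b f) = (fst b)^k - (fst b + snd b)^k + mom k f"
  by (simp add: mom_def)

lemma uniform_inj:
  assumes "l > 0" "\<forall>b\<in>#A. snd b = l" "\<forall>b\<in>#B. snd b = l" "crit A = crit B"
  shows "A = B"
  using assms(2-4)
proof (induction "size A + size B" arbitrary: A B rule: less_induct)
  case less
  show ?case
  proof (cases "A + B = {#}")
    case True then show ?thesis by simp
  next
    case False
    define m where "m = Max (fst ` set_mset (A + B))"
    have fin: "finite (fst ` set_mset (A + B))" by simp
    have ne: "fst ` set_mset (A + B) \<noteq> {}" using False by simp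
    have mx: "\<And>b. b \<in># A + B \<Longrightarrow> fst b \<le> m" unfolding m_def using fin by auto
    have ex: "\<exists>b\<in># A + B. fst b = m" proof -
      have "Max (fst ` set_mset (A + B)) \<in> fst ` set_mset (A + B)" using Max_in[OF fin ne] .
      then obtain b where "b \<in># A + B" "fst b = Max (fst ` set_mset (A + B))" by (rule imageE) auto
      then show ?thesis unfolding m_def by (intro bexI[of _ b])
    qed
    have key: "crit C (m + l) = - int (count C (m, l))"
      if "\<forall>b\<in>#C. snd b = l" "\<forall>b\<in>#C. fst b \<le> m" for C
    proof -
      have "filter_mset (\<lambda>b. fst b = m + l) C = {#}"
        using that assms(1) by (auto simp: filter_mset_eq_conv)
      moreover have "filter_mset (\<lambda>b. fst b + snd b = m + l) C = filter_mset (\<lambda>y. y = (m, l)) C"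
        by (rule filter_mset_cong) (use that in auto)
      ultimately show ?thesis by (simp add: crit_def count_conv_size_mset)
    qed
    have cA: "crit A (m + l) = - int (count A (m, l))" using less.prems mx by (intro key) auto
    have cB: "crit B (m + l) = - int (count B (m, l))" using less.prems mx by (intro key) auto
    have ceq: "count A (m, l) = count B (m, l)" using cA cB less.prems(3) by simp
    obtain b where b: "b \<in># A + B" "fst b = m" using ex by blast
    have "b = (m, l)" using b less.prems by (cases b) auto
    then have "(m,l) \<in># A \<or> (m,l) \<in># B" using b by simp
    then have "count A (m,l) > 0 \<or> count B (m,l) > 0" by simp
    then have "count A (m,l) > 0 \<and> count B (m,l) > 0" using ceq by auto
    then have inA: "(m,l) \<in># A" and inB: "(m,l) \<in># B" by simp_all
    obtain A' where A': "A = add_mset (m,l) A'" using inA by (metis insert_DiffM)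
    obtain B' where B': "B = add_mset (m,l) B'" using inB by (metis insert_DiffM)
    have "crit A' = crit B'"
    proof
      fix g show "crit A' g = crit B' g" using less.prems(3) unfolding A' B'
        by (metis crit_add add_right_cancel diff_add_cancel)
    qed
    then have "A' = B'" using less.hyps[of A' B'] less.prems A' B' by auto
    then show ?thesis using A' B' by simp
  qed
qed

theorem proposition12:
  fixes l lt \<delta> :: real
  assumes "l > 0" and "lt > 0"
  shows "inj_on crit (barcode_family l lt \<delta>)"
proof (rule inj_onI)
  fix f g assume f: "f \<in> barcode_family l lt \<delta>" and g: "g \<in> barcode_family l lt \<delta>"
    and c: "crit f = crit g"
  obtain a xs where fd: "f = add_mset (a, lt) (mset (map (\<lambda>a. (a, l)) xs))" and df: "drift f = \<delta>"
    using f unfolding barcode_family_def by blast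
  obtain b ys where gd: "g = add_mset (b, lt) (mset (map (\<lambda>a. (a, l)) ys))" and dg: "drift g = \<delta>"
    using g unfolding barcode_family_def by blast
  have sa: "sum_list xs = \<delta> - a" using df fd drift_list[of l xs] by (simp add: drift_def)
  have sb: "sum_list ys = \<delta> - b" using dg gd drift_list[of l ys] by (simp add: drift_def)
  have "mom 1 f = mom 1 g" using mom_eq[OF c] .
  then have "real (length xs) * l = real (length ys) * l"
    unfolding fd gd mom_add using mom1_list[of l xs] mom1_list[of l ys] by simp
  then have len: "length xs = length ys" using assms(1) by simp
  have "mom 2 f = mom 2 g" using mom_eq[OF c] .
  then have "a^2 - (a + lt)^2 - 2 * l * (\<delta> - a) = b^2 - (b + lt)^2 - 2 * l * (\<delta> - b)"
    unfolding fd gd mom_add using mom2_list[of l xs] mom2_list[of l ys] by (simp add: sa sb len)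
  then have eq2: "(lt - l) * (a - b) = 0" by (simp add: algebra_simps power2_eq_square)
  show "f = g"
  proof (cases "lt = l")
    case True
    show ?thesis by (rule uniform_inj[OF assms(1) _ _ c]) (auto simp: fd gd True)
  next
    case False
    then have ab: "a = b" using eq2 by simp
    have "crit (mset (map (\<lambda>a. (a, l)) xs)) = crit (mset (map (\<lambda>a. (a, l)) ys))"
    proof
      fix x show "crit (mset (map (\<lambda>a. (a, l)) xs)) x = crit (mset (map (\<lambda>a. (a, l)) ys)) x"
        using fun_cong[OF c, of x] unfolding fd gd ab crit_add by simp
    qed
    then have "mset (map (\<lambda>a. (a, l)) xs) = mset (map (\<lambda>a. (a, l)) ys)"
      by (rule uniform_inj[OF assms(1), rotated 2]) auto
    then show ?thesis using fd gd ab by simp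
  qed
qed

end
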